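(* (1) Figure-eight knot. Let $\Delta(E;t)=-t^2+3t-1$ be the Alexander polynomial of the figure-eight knot $E$. For $u\in\mathbb{C}$ and $y\in\mathbb{C}\setminus\{0\}$ with $y+y^{-1}=2\cosh(u)-1$, put \[ H(E;u,y)=\operatorname{Li}_2\bigl(y^{-1}e^{-u}\bigr)-\operatorname{Li}_2\bigl(y\,e^{-u}\bigr)+\bigl(\log(-y)+\pi\sqrt{-1}\bigr)u, \] where $\operatorname{Li}_2$ is the dilogarithm and the branch of $\log$ is chosen so that $\log(-1)=-\pi\sqrt{-1}$. Then there exist $u\in\mathbb{C}$ and such a $y$ with $H(E;u,y)=0$ and $\Delta(E;e^{u})=0$. (2) Torus knots. Let $a,b>1$ be coprime integers, let $\Delta(T(a,b);t)=\dfrac{(t^{ab}-1)(t-1)}{(t^a-1)(t^b-1)}$ be the Alexander polynomial of the torus knot $T(a,b)$, and define the entire function \[ H\bigl(T(a,b);u\bigr)=\frac{-\bigl(ab(u+2\pi\sqrt{-1})-2\pi\sqrt{-1}\bigr)^2}{4ab},\qquad u\in\mathbb{C}. \] Then the equations $H\bigl(T(a,b);u\bigr)=0$ and $\Delta\bigl(T(a,b);e^{u}\bigr)=0$ have a common root $u\in\mathbb{C}$.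
   Context: Here $\Delta(T(a,b);t)$ is understood as the polynomial in $t$ obtained from the given rational expression (which is a polynomial), and $\Delta(K;e^u)=0$ means this polynomial vanishes at $t=e^u$. The functions $H$ above are the explicit formulas (regarded as functions on all of $\mathbb{C}$) for the quantity $H(K;u)=(u+2\pi\sqrt{-1})\lim_{N\to\infty}\frac{1}{N}\log J_N\bigl(K;\exp((u+2\pi\sqrt{-1})/N)\bigr)$, where $J_N(K;q)$ is the $N$-colored Jones polynomial normalized so that $J_N(\text{unknot};q)=1$. *)

theory Defs
  imports "HOL-Complex_Analysis.Complex_Analysis"
begin

definition Li2 :: "complex \<Rightarrow> complex" where
  "Li2 z = - contour_integral (linepath 0 z) (\<lambda>t. Ln (1 - t) / t)"

text \<open>Branch of log with argument in [-pi, pi), so that logm (-1) = - pi i.\<close>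
definition logm :: "complex \<Rightarrow> complex" where
  "logm z = (if Im z = 0 \<and> Re z < 0 then Ln z - 2 * of_real pi * \<i> else Ln z)"

definition alex_E :: "complex poly" where
  "alex_E = [:-1, 3, -1:]"

definition H_E :: "complex \<Rightarrow> complex \<Rightarrow> complex" where
  "H_E u y = Li2 (inverse y * exp (-u)) - Li2 (y * exp (-u))
             + (logm (-y) + of_real pi * \<i>) * u"

definition alex_T :: "nat \<Rightarrow> nat \<Rightarrow> complex poly" where
  "alex_T a b = ((monom 1 (a*b) - 1) * [:-1, 1:]) div ((monom 1 a - 1) * (monom 1 b - 1))"

definition H_T :: "nat \<Rightarrow> nat \<Rightarrow> complex \<Rightarrow> complex" where
  "H_T a b u = - ((of_nat (a*b) * (u + 2 * of_real pi * \<i>) - 2 * of_real pi * \<i>)^2)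
               / (4 * of_nat (a*b))"

end

theory Submission
  imports Defs "HOL-Computational_Algebra.Polynomial_Factorial"
    "HOL-Computational_Algebra.Fundamental_Theorem_Algebra" "HOL-Computational_Algebra.Field_as_Ring"
begin

definition PP :: "nat \<Rightarrow> complex poly" where
  "PP n = (\<Sum>i<n. [:0,1:]^i)"

lemma XP: "[:0,1:]^n - 1 = ([:0,1:] - 1) * PP n"
  unfolding PP_def by (rule power_diff_1_eq)

lemma poly_XP: "z^n - 1 = (z - 1) * poly (PP n) z"
  using arg_cong[OF XP[of n], of "\<lambda>p. poly p z"] by simp

lemma poly_PP1: "poly (PP n) 1 = of_nat n"
  unfolding PP_def by (simp add: poly_sum poly_power)

lemma root_PP: assumes "poly (PP n) z = 0" shows "z^n = 1"
  using poly_XP[of z n] assms by simp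

lemma Xm1_nz: "([:0,1:] - 1 :: complex poly) \<noteq> 0"
proof
  assume "([:0,1:] - 1 :: complex poly) = 0"
  hence "poly ([:0,1:] - 1 :: complex poly) 0 = 0" by simp
  thus False by simp
qed

lemma PP_dvd: "PP a dvd PP (a*b)"
proof -
  have "([:0,1:]^a :: complex poly) - 1 dvd ([:0,1:]^a)^b - 1"
    using power_diff_1_eq[of "[:0,1:]^a :: complex poly" b] by (metis dvd_triv_left)
  hence "([:0,1:] - 1) * PP a dvd ([:0,1:] - 1) * PP (a*b)"
    by (simp add: XP[symmetric] power_mult)
  thus ?thesis using Xm1_nz by simp
qed

lemma PP_coprime:
  assumes "coprime a b" "a > 0"
  shows "coprime (PP a) (PP b)"
proof (rule ccontr)
  assume nc: "\<not> coprime (PP a) (PP b)"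
  let ?g = "gcd (PP a) (PP b)"
  have "PP a \<noteq> 0"
  proof
    assume "PP a = 0" hence "poly (PP a) 1 = 0" by simp
    with poly_PP1 assms(2) show False by simp
  qed
  hence g0: "?g \<noteq> 0" by simp
  have "\<not> is_unit ?g" using nc by (metis is_unit_gcd)
  hence "degree ?g \<noteq> 0" using is_unit_iff_degree[OF g0] by simp
  hence "\<not> constant (poly ?g)" by (simp add: constant_degree)
  then obtain z where z: "poly ?g z = 0" using fundamental_theorem_of_algebra by blast
  have za: "poly (PP a) z = 0" using z by (metis gcd_dvd1 dvd_trans poly_eq_0_iff_dvd)
  have zb: "poly (PP b) z = 0" using z by (metis gcd_dvd2 dvd_trans poly_eq_0_iff_dvd)
  have a1: "z^a = 1" using root_PP[OF za] .
  have b1: "z^b = 1" using root_PP[OF zb] .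
  obtain x y where xy: "a * x = b * y + gcd a b" using bezout_nat assms(2) by blast
  hence "a * x = b * y + 1" using assms(1) by simp
  hence "z^(a*x) = z^(b*y) * z" by (simp add: power_add)
  hence "z = 1" using a1 b1 by (simp add: power_mult)
  with za poly_PP1 assms(2) show False by simp
qed

lemma alex_dvd:
  assumes "coprime a b" "a > 0" "b > 0"
  shows "((monom 1 a - 1) * (monom 1 b - 1) :: complex poly) dvd (monom 1 (a*b) - 1) * [:-1, 1:]"
proof -
  have d1: "PP a dvd PP (a*b)" by (rule PP_dvd)
  have d2: "PP b dvd PP (a*b)" by (metis PP_dvd mult.commute)
  have d: "PP a * PP b dvd PP (a*b)"
    using divides_mult[OF d1 d2 PP_coprime[OF assms(1,2)]] .
  have m: "monom 1 n = ([:0,1:]^n :: complex poly)" for n by (simp add: monom_altdef)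
  have x: "[:-1, 1:] = ([:0,1:] - 1 :: complex poly)" by (simp add: one_pCons)
  show ?thesis unfolding m x XP using d
    by (simp add: ac_simps mult_dvd_mono)
qed

lemma part2:
  assumes "1 < a" "1 < b" "coprime a b"
  shows "\<exists>u. H_T a b u = 0 \<and> poly (alex_T a b) (exp u) = 0"
proof -
  define n where "n = a * b"
  have n0: "n > 0" using assms n_def by simp
  define u where "u = 2 * of_real pi * \<i> / of_nat n - 2 * of_real pi * \<i>"
  have "of_nat n * (u + 2 * of_real pi * \<i>) - 2 * of_real pi * \<i> = 0"
    unfolding u_def using n0 by simp
  hence H: "H_T a b u = 0" unfolding H_T_def n_def[symmetric] by simp
  define z where "z = exp u"
  have z: "z = exp (2 * of_real pi * \<i> / of_nat n)"
    unfolding z_def u_def by (simp add: exp_diff)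
  have zn: "z ^ n = 1" unfolding z using n0 by (simp add: exp_of_nat_mult[symmetric])
  have zk: "z ^ k \<noteq> 1" if "0 < k" "k < n" for k
  proof
    assume "z ^ k = 1"
    hence "exp (of_nat k * (2 * of_real pi * \<i> / of_nat n)) = 1" unfolding z by (simp add: exp_of_nat_mult[symmetric])
    then obtain m :: int where m: "real k * (2 * pi / real n) = of_int (2*m) * pi"
      unfolding exp_eq_1 by auto
    hence "real k / real n = of_int m" using n0 by (simp add: field_simps)
    hence "real k = of_int m * real n" using n0 by (simp add: field_simps)
    hence "int k = m * int n" by (metis of_int_eq_iff of_int_mult of_int_of_nat_eq)
    moreover have "m \<le> 0 \<or> m \<ge> 1" by arith
    moreover have "m \<le> 0 \<Longrightarrow> m * int n \<le> 0" by (simp add: mult_nonpos_nonneg)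
    moreover have "m \<ge> 1 \<Longrightarrow> m * int n \<ge> int n" using mult_right_mono[of 1 m "int n"] by simp
    ultimately show False using that by linarith
  qed
  have za: "z ^ a \<noteq> 1" using zk[of a] assms n_def by simp
  have zb: "z ^ b \<noteq> 1" using zk[of b] assms n_def by simp
  let ?d = "(monom 1 a - 1) * (monom 1 b - 1) :: complex poly"
  let ?p = "(monom 1 (a*b) - 1) * [:-1, 1:] :: complex poly"
  obtain q where q: "?p = ?d * q" using alex_dvd[OF assms(3)] assms by (meson dvd_def less_trans zero_less_one)
  have pd: "poly ?d z \<noteq> 0" using za zb by (simp add: poly_monom)
  have d0: "?d \<noteq> 0" using pd by auto
  have "poly ?p z = 0" using zn n_def by (simp add: poly_monom)
  moreover have "poly ?p z = poly ?d z * poly q z" using q by (metis poly_mult)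
  ultimately have "poly q z = 0" using pd by simp
  moreover have "alex_T a b = q" unfolding alex_T_def q using d0 by simp
  ultimately show ?thesis using H z_def by auto
qed

lemma part1:
  "\<exists>u y. y \<noteq> 0 \<and> y + inverse y = 2 * cosh u - 1
             \<and> H_E u y = 0 \<and> poly alex_E (exp u) = 0"
proof -
  define t :: real where "t = (3 + sqrt 5) / 2"
  have t0: "t > 0" unfolding t_def by (simp add: add_pos_nonneg)
  have s5: "sqrt 5 * sqrt 5 = (5::real)" by simp
  have tt: "t * t = 3 * t - 1" unfolding t_def using s5 by (simp add: field_simps)
  define u :: complex where "u = of_real (ln t)"
  have eu: "exp u = of_real t" unfolding u_def using t0 by (metis exp_ln exp_of_real)
  have emu: "exp (-u) = of_real (inverse t)" using eu by (simp add: exp_minus)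
  have "inverse t = 3 - t" using tt t0 by (simp add: field_simps)
  hence ch: "2 * cosh u = 3" unfolding cosh_def using eu emu
    by (simp add: scaleR_conv_of_real)
  have "logm (-1) = - of_real pi * \<i>" unfolding logm_def by simp
  hence H: "H_E u 1 = 0" unfolding H_E_def by simp
  have "poly alex_E (exp u) = 0" unfolding alex_E_def eu
  proof -
    have "- (t*t) + 3 * t - 1 = 0" using tt by simp
    hence "complex_of_real (- (t*t) + 3 * t - 1) = 0" by simp
    thus "poly [:-1, 3, -1:] (complex_of_real t) = 0" by (simp add: algebra_simps)
  qed
  thus ?thesis using H ch by (intro exI[of _ u] exI[of _ 1]) simp
qed

theorem mainTheorem1:
  shows "(\<exists>u y. y \<noteq> 0 \<and> y + inverse y = 2 * cosh u - 1
             \<and> H_E u y = 0 \<and> poly alex_E (exp u) = 0)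
       \<and> (\<forall>a b :: nat. 1 < a \<longrightarrow> 1 < b \<longrightarrow> coprime a b \<longrightarrow>
             (\<exists>u. H_T a b u = 0 \<and> poly (alex_T a b) (exp u) = 0))"
  using part1 part2 by blast

end
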